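(* Let $n\ge1$, $0<\delta\le1/3$, $b=\delta n$ (a positive integer), $B=2^b$, $\eta>0$ with $B=\eta K$, and let $C\ge3$ be an integer with $Cb\le n$. Let $\mathcal{K}$ consist of $K$ indices chosen independently and uniformly at random from $\mathbb{F}_2^n$, and form the bipartite graph with left nodes $\mathcal{K}$, right nodes $\{(c,\mathbf{j}):c\in[C],\mathbf{j}\in\mathbb{F}_2^b\}$, and an edge between $\mathbf{k}$ and $(c,\mathcal{H}_c(\mathbf{k}))$ for each $c\in[C]$, where $\mathcal{H}_c(\mathbf{k})=(k[(c-1)b+1],\dots,k[cb])$. Then there is a sufficiently small constant $\varepsilon>0$ such that, with probability at least $1-O(1/K)$, this graph is an $(\varepsilon,1/2,C)$-expander.
   Context: A $C$-regular bipartite graph with $K$ left nodes and $C$ groups of $B=\eta K$ right nodes is an $(\varepsilon,1/2,C)$-expander if for every subset $\mathcal{S}$ of left nodes with $|\mathcal{S}|\le\varepsilon K$ there exists a group $c\in[C]$ such that the set $\mathcal{N}_c(\mathcal{S})$ of right nodes in group $c$ adjacent to $\mathcal{S}$ satisfies $|\mathcal{N}_c(\mathcal{S})|>|\mathcal{S}|/2$. Here $[C]=\{1,\dots,C\}$ and $\mathbf{k}=[k[1],\dots,k[n]]^T$. *)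

theory Defs
  imports "HOL-Probability.Probability"
begin

text \<open>A vector k in F_2^n is modelled as an extensional map {1..n} -> bool
  (k j = k[j]).  The K random indices are a map i in {0..<K} to such vectors;
  left node i carries the index k i (repetitions are allowed, since the
  indices are drawn independently).\<close>

definition idx_space :: "nat \<Rightarrow> nat \<Rightarrow> (nat \<Rightarrow> nat \<Rightarrow> bool) set" where
  "idx_space K n = {0..<K} \<rightarrow>\<^sub>E ({1..n} \<rightarrow>\<^sub>E (UNIV :: bool set))"

definition hashc :: "nat \<Rightarrow> nat \<Rightarrow> (nat \<Rightarrow> bool) \<Rightarrow> (nat \<Rightarrow> bool)" where
  "hashc b c k = (\<lambda>j\<in>{1..b}. k ((c - 1) * b + j))"

definition nbhd :: "nat \<Rightarrow> nat \<Rightarrow> (nat \<Rightarrow> nat \<Rightarrow> bool) \<Rightarrow> nat set \<Rightarrow> (nat \<Rightarrow> bool) set" where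
  "nbhd b c k S = (\<lambda>i. hashc b c (k i)) ` S"

definition is_expander ::
  "real \<Rightarrow> real \<Rightarrow> nat \<Rightarrow> nat \<Rightarrow> nat \<Rightarrow> (nat \<Rightarrow> nat \<Rightarrow> bool) \<Rightarrow> bool" where
  "is_expander eps d C b K k \<longleftrightarrow>
     (\<forall>S \<subseteq> {0..<K}. S \<noteq> {} \<and> real (card S) \<le> eps * real K \<longrightarrow>
        (\<exists>c\<in>{1..C}. real (card (nbhd b c k S)) > d * real (card S)))"

end

theory Submission
  imports Defs
begin

lemma pow_fact_le_exp: "(x::real) \<ge> 0 \<Longrightarrow> x ^ n / fact n \<le> exp x"
proof -
  assume x: "x \<ge> 0"
  have s: "(\<lambda>n. x^n / fact n) sums exp x" using exp_converges[of x] by (simp add: divide_inverse_commute scaleR_conv_of_real)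
  have "sum (\<lambda>n. x^n / fact n) {n} \<le> suminf (\<lambda>n. x^n / fact n)"
    by (rule sum_le_suminf) (use s x in \<open>auto simp: sums_iff\<close>)
  then show ?thesis using s by (simp add: sums_iff)
qed

lemma choose_bound: "real (n choose k) \<le> real n ^ k / fact k"
proof -
  have "real ((n choose k) * fact k) \<le> real (n ^ k)" using binomial_fact_pow[of n k] by linarith
  then have "real (n choose k) * fact k \<le> real n ^ k" by simp
  then show ?thesis by (simp add: field_simps)
qed

lemma choose_bound2: assumes "s > 0" shows "real (n choose s) \<le> (exp 1 * real n / real s) ^ s"
proof -
  have "real (n choose s) \<le> real n ^ s / fact s" by (rule choose_bound)
  also have "\<dots> = (real n / real s) ^ s * (real s ^ s / fact s)" using assms by (simp add: field_simps power_divide)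
  also have "\<dots> \<le> (real n / real s) ^ s * exp (real s)"
    by (rule mult_left_mono) (auto intro: pow_fact_le_exp)
  also have "exp (real s) = exp 1 ^ s" using exp_of_nat_mult[of s 1] by simp
  also have "(real n / real s) ^ s * exp 1 ^ s = (exp 1 * real n / real s) ^ s" by (simp add: power_mult_distrib[symmetric] mult.commute)
  finally show ?thesis .
qed

lemma choose_bound3: assumes "B > 0" "t \<le> s"
  shows "real (B choose t) * (real t / real B) ^ s \<le> exp (real t) * (real t / real B) ^ (s - t)"
proof -
  have e: "(real t / real B) ^ s = (real t / real B) ^ t * (real t / real B) ^ (s - t)"
    using assms by (simp add: power_add[symmetric])
  have "real (B choose t) * (real t / real B) ^ t \<le> real B ^ t / fact t * (real t / real B) ^ t"
    by (rule mult_right_mono[OF choose_bound]) simp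
  also have "\<dots> = real t ^ t / fact t" using assms by (simp add: power_divide)
  also have "\<dots> \<le> exp (real t)" by (rule pow_fact_le_exp) simp
  finally have "real (B choose t) * (real t / real B) ^ t \<le> exp (real t)" .
  then show ?thesis unfolding e
    by (metis (no_types, lifting) mult.assoc mult_right_mono divide_nonneg_nonneg of_nat_0_le_iff zero_le_power)
qed

lemma term_bound:
  fixes K s t B :: nat and \<eta> eps A Q :: real
  assumes eta: "\<eta> > 0" and K: "K > 0" and B: "real B = \<eta> * real K" and s2: "2 \<le> s"
    and t: "t = s div 2" and seps: "real s \<le> eps * real K" and eps2: "eps \<le> 2 * \<eta>"
    and A: "A = max 1 (exp 1 / (2 * \<eta>))" and Q: "Q = A^2 * exp 3 / (2 * \<eta>)"
    and Qeps: "Q * eps \<le> 1/16"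
  shows "real (K choose s) * (real (B choose t) * (real t / real B) ^ s) ^ 3
         \<le> 64 * A * Q / real K * (1/2) ^ s"
proof -
  define r where "r = real s / real K"
  define p where "p = real t / real B"
  have Bpos: "B > 0" using B eta K by (metis mult_pos_pos of_nat_0_less_iff)
  have t1: "t \<ge> 1" "t \<le> s" "2 * t \<le> s" "s \<le> 2 * t + 1" using s2 t by auto
  have r0: "r > 0" using K s2 by (simp add: r_def)
  have reps: "r \<le> eps" using seps K by (simp add: r_def field_simps)
  have p0: "p \<ge> 0" by (simp add: p_def)
  have pr: "p \<le> r / (2 * \<eta>)"
  proof -
    have "real t * 2 \<le> real s" using t1 by linarith
    then show ?thesis using B eta K Bpos by (simp add: p_def r_def field_simps)
  qed
  have r1: "r / (2 * \<eta>) \<le> 1" using reps eps2 eta by (simp add: field_simps)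
  have p1: "p \<le> 1" using pr r1 by linarith
  have h1: "real (K choose s) \<le> (exp 1 / r) ^ s"
    using choose_bound2[of s K] s2 by (simp add: r_def field_simps)
  have h2: "real (B choose t) * p ^ s \<le> exp (real t) * p ^ (s - t)"
    using choose_bound3[OF Bpos t1(2)] by (simp add: p_def)
  have h20: "0 \<le> real (B choose t) * p ^ s" using p0 by simp
  have "real (K choose s) * (real (B choose t) * p ^ s) ^ 3 \<le> (exp 1 / r) ^ s * (exp (real t) * p ^ (s - t)) ^ 3"
    apply (rule mult_mono[OF h1 power_mono[OF h2 h20]])
    using r0 h20 by auto
  also have "\<dots> = (exp 1 / r) ^ s * exp (real t) ^ 3 * p ^ (3 * (s - t))"
    by (simp add: power_mult_distrib power_mult[symmetric] mult.commute)
  also have "\<dots> \<le> (exp 1 / r) ^ s * exp (real t) ^ 3 * (r / (2 * \<eta>)) ^ (s + t)"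
  proof -
    have "p ^ (3 * (s - t)) \<le> p ^ (s + t)" using p0 p1 t1 by (intro power_decreasing) auto
    also have "\<dots> \<le> (r / (2 * \<eta>)) ^ (s + t)" using p0 pr by (rule power_mono[rotated])
    finally show ?thesis using r0 by (intro mult_left_mono) auto
  qed
  also have "\<dots> = (exp 1 / (2 * \<eta>)) ^ s * (exp 3 * (r / (2 * \<eta>))) ^ t"
  proof -
    have X: "exp (real t) ^ 3 = exp 3 ^ t"
      by (metis exp_of_nat_mult mult.commute of_nat_numeral power_mult)
    have Y: "(exp 1 / r) ^ s * (r / (2 * \<eta>)) ^ s = (exp 1 / (2 * \<eta>)) ^ s"
      using r0 by (simp add: power_mult_distrib[symmetric])
    have "(exp 1 / r) ^ s * exp (real t) ^ 3 * (r / (2 * \<eta>)) ^ (s + t)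
        = ((exp 1 / r) ^ s * (r / (2 * \<eta>)) ^ s) * (exp 3 ^ t * (r / (2 * \<eta>)) ^ t)"
      by (simp add: X power_add mult_ac)
    also have "\<dots> = (exp 1 / (2 * \<eta>)) ^ s * (exp 3 * (r / (2 * \<eta>))) ^ t"
      by (simp only: Y power_mult_distrib)
    finally show ?thesis .
  qed
  also have "\<dots> \<le> A * (Q * r) ^ t"
  proof -
    have "(exp 1 / (2 * \<eta>)) ^ s \<le> A ^ s" using A eta by (intro power_mono) auto
    also have "\<dots> \<le> A ^ (2 * t + 1)" using A t1 by (intro power_increasing) auto
    also have "\<dots> = A * (A^2) ^ t" by (simp add: power_mult power_add)
    finally have a: "(exp 1 / (2 * \<eta>)) ^ s \<le> A * (A^2) ^ t" .
    have "(exp 1 / (2 * \<eta>)) ^ s * (exp 3 * (r / (2 * \<eta>))) ^ t \<le> A * (A^2) ^ t * (exp 3 * (r / (2 * \<eta>))) ^ t"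
      using r0 eta by (intro mult_right_mono[OF a]) auto
    also have "\<dots> = A * (A^2 * (exp 3 * (r / (2 * \<eta>)))) ^ t" by (simp only: power_mult_distrib mult.assoc)
    also have "A^2 * (exp 3 * (r / (2 * \<eta>))) = Q * r" using Q by simp
    finally show ?thesis by simp
  qed
  also have "\<dots> \<le> A * (Q * r * (1/16) ^ (t - 1))"
  proof -
    have Qr0: "0 \<le> Q * r" using Q eta r0 by auto
    have Qr: "Q * r \<le> 1/16" using reps Qr0 Qeps Q eta
      by (smt (verit) mult_left_mono zero_le_divide_iff zero_le_mult_iff exp_ge_zero zero_le_power2)
    have "(Q * r) ^ t = Q * r * (Q * r) ^ (t - 1)" using t1 by (metis Suc_diff_1 less_le_trans power_Suc zero_less_one)
    also have "\<dots> \<le> Q * r * (1/16) ^ (t - 1)" using Qr0 Qr by (intro mult_left_mono power_mono) auto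
    finally show ?thesis using A by (intro mult_left_mono) auto
  qed
  also have "\<dots> \<le> 64 * A * Q / real K * (1/2) ^ s"
  proof -
    have "(4::real) ^ (s - 1) \<le> 4 ^ (2 * t)" using t1 by (intro power_increasing) auto
    also have "\<dots> = 16 ^ t" by (simp add: power_mult)
    finally have a: "(4::real) ^ (s - 1) \<le> 16 ^ t" .
    have b: "(16::real) ^ t = 16 * 16 ^ (t - 1)" using t1 by (metis Suc_diff_1 less_le_trans power_Suc zero_less_one)
    have c: "(4::real) ^ s = 4 * 4 ^ (s - 1)" using t1 s2 by (metis Suc_diff_1 less_le_trans power_Suc zero_less_one le_trans one_le_numeral)
    have "(1/16::real) ^ (t - 1) \<le> 64 / 4 ^ s"
      using a b c by (simp add: power_one_over field_simps)
    moreover have "real s \<le> 2 ^ s" using less_exp[of s] by (metis of_nat_le_iff of_nat_numeral of_nat_power less_imp_le)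
    ultimately have d: "real s * (1/16::real) ^ (t - 1) \<le> 2 ^ s * (64 / 4 ^ s)"
      by (intro mult_mono) auto
    have e: "(2::real) ^ s * (64 / 4 ^ s) = 64 * (1/2) ^ s"
      by (simp add: power_one_over field_simps power_mult_distrib[symmetric])
    have QA: "0 \<le> A * Q / real K" using Q A eta by auto
    have "A * (Q * r * (1/16) ^ (t - 1)) = A * Q / real K * (real s * (1/16) ^ (t - 1))"
      by (simp add: r_def)
    also have "\<dots> \<le> A * Q / real K * (64 * (1/2) ^ s)" using d e QA by (intro mult_left_mono) auto
    finally show ?thesis by (simp add: mult_ac)
  qed
  finally show ?thesis by (simp add: p_def)
qed
lemma hashc_at: "j \<in> {1..b} \<Longrightarrow> hashc b c v j = v ((c - 1) * b + j)"
  by (simp add: hashc_def)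

lemma hashc_in: "hashc b c v \<in> {1..b} \<rightarrow>\<^sub>E (UNIV :: bool set)"
  by (simp add: hashc_def)

lemma card_Vs: "card ({1..n::nat} \<rightarrow>\<^sub>E (UNIV :: bool set)) = 2 ^ n"
  by (simp add: card_PiE)

lemma card_A:
  assumes n: "3 * b \<le> n" and T: "card T1 = t" "card T2 = t" "card T3 = t"
    and fin: "finite T1" "finite T2" "finite T3"
  shows "card {v \<in> {1..n} \<rightarrow>\<^sub>E (UNIV :: bool set). hashc b 1 v \<in> T1 \<and> hashc b 2 v \<in> T2 \<and> hashc b 3 v \<in> T3}
         \<le> t ^ 3 * 2 ^ (n - 3 * b)"
proof -
  let ?R = "{3 * b + 1..n} \<rightarrow>\<^sub>E (UNIV :: bool set)"
  let ?A = "{v \<in> {1..n} \<rightarrow>\<^sub>E (UNIV :: bool set). hashc b 1 v \<in> T1 \<and> hashc b 2 v \<in> T2 \<and> hashc b 3 v \<in> T3}"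
  define f where "f v = (hashc b 1 v, hashc b 2 v, hashc b 3 v, restrict v {3 * b + 1..n})" for v :: "nat \<Rightarrow> bool"
  have inj: "inj_on f ?A"
  proof (rule inj_onI)
    fix v w assume v: "v \<in> ?A" and w: "w \<in> ?A" and eq: "f v = f w"
    have h1: "hashc b 1 v = hashc b 1 w" and h2: "hashc b 2 v = hashc b 2 w"
      and h3: "hashc b 3 v = hashc b 3 w" and h4: "restrict v {3 * b + 1..n} = restrict w {3 * b + 1..n}"
      using eq by (auto simp: f_def)
    show "v = w"
    proof
      fix j
      show "v j = w j"
      proof (cases "j \<in> {1..n}")
        case False
        then show ?thesis using v w by (auto simp: PiE_def extensional_def)
      next
        case True
        consider "j \<le> b" | "b < j \<and> j \<le> 2 * b" | "2 * b < j \<and> j \<le> 3 * b" | "3 * b < j" by linarith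
        then show ?thesis
        proof cases
          case 1
          then show ?thesis using fun_cong[OF h1, of j] True by (simp add: hashc_at)
        next
          case 2
          then have "j - b \<in> {1..b}" by auto
          then show ?thesis using fun_cong[OF h2, of "j - b"] 2 by (simp add: hashc_at)
        next
          case 3
          then have "j - 2 * b \<in> {1..b}" by auto
          moreover have "(3 - 1) * b + (j - 2 * b) = j" using 3 by simp
          ultimately show ?thesis using fun_cong[OF h3, of "j - 2 * b"] by (simp add: hashc_at)
        next
          case 4
          then show ?thesis using fun_cong[OF h4, of j] True by simp
        qed
      qed
    qed
  qed
  have into: "f ` ?A \<subseteq> T1 \<times> T2 \<times> T3 \<times> ?R" by (auto simp: f_def)
  have "card ?A \<le> card (T1 \<times> T2 \<times> T3 \<times> ?R)"
    by (rule card_inj_on_le[OF inj into]) (use fin in \<open>auto simp: finite_PiE\<close>)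
  also have "\<dots> = t ^ 3 * 2 ^ (n - 3 * b)"
    using T by (simp add: card_cartesian_product card_PiE power3_eq_cube)
  finally show ?thesis .
qed

lemma card_E:
  assumes S: "S \<subseteq> {0..<K}" "card S = s" and n: "3 * b \<le> n"
    and T: "card T1 = t" "card T2 = t" "card T3 = t"
    and fin: "finite T1" "finite T2" "finite T3"
  shows "real (card {k \<in> idx_space K n. \<forall>i\<in>S. hashc b 1 (k i) \<in> T1 \<and> hashc b 2 (k i) \<in> T2 \<and> hashc b 3 (k i) \<in> T3})
         \<le> 2 ^ (n * K) * (real t / 2 ^ b) ^ (3 * s)"
proof -
  let ?V = "{1..n} \<rightarrow>\<^sub>E (UNIV :: bool set)"
  let ?A = "{v \<in> ?V. hashc b 1 v \<in> T1 \<and> hashc b 2 v \<in> T2 \<and> hashc b 3 v \<in> T3}"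
  have sK: "s \<le> K" using S by (metis card_atLeastLessThan card_mono finite_atLeastLessThan diff_zero)
  have eq: "{k \<in> idx_space K n. \<forall>i\<in>S. hashc b 1 (k i) \<in> T1 \<and> hashc b 2 (k i) \<in> T2 \<and> hashc b 3 (k i) \<in> T3}
      = PiE {0..<K} (\<lambda>i. if i \<in> S then ?A else ?V)"
    using S(1) by (auto simp: idx_space_def PiE_iff split: if_splits intro: extensional_arb)
  have "card (PiE {0..<K} (\<lambda>i. if i \<in> S then ?A else ?V)) = (\<Prod>i\<in>{0..<K}. card (if i \<in> S then ?A else ?V))"
    by (simp add: card_PiE)
  also have "\<dots> = (\<Prod>i\<in>{0..<K}. if i \<in> S then card ?A else 2 ^ n)"
    by (rule prod.cong) (use card_Vs[of n] in auto)
  also have "\<dots> = card ?A ^ s * (2 ^ n) ^ (K - s)"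
  proof -
    have a: "{0..<K} \<inter> S = S" using S by auto
    have b: "card ({0..<K} \<inter> - S) = K - s"
    proof -
      have "{0..<K} \<inter> - S = {0..<K} - S" by auto
      then show ?thesis using S by (simp add: card_Diff_subset finite_subset)
    qed
    show ?thesis by (simp add: prod.If_cases a b S(2))
  qed
  finally have c: "card (PiE {0..<K} (\<lambda>i. if i \<in> S then ?A else ?V)) = card ?A ^ s * (2 ^ n) ^ (K - s)" .
  have cA: "real (card ?A) \<le> real t ^ 3 * 2 ^ (n - 3 * b)"
  proof -
    have cA0: "card ?A \<le> t ^ 3 * 2 ^ (n - 3 * b)" by (rule card_A[OF n T fin])
    show ?thesis using of_nat_mono[OF cA0, where 'a=real] by simp
  qed
  have "real (card ?A ^ s * (2 ^ n) ^ (K - s)) \<le> (real t ^ 3 * 2 ^ (n - 3 * b)) ^ s * (2 ^ n) ^ (K - s)"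
    using cA by (simp add: power_mono mult_right_mono)
  also have "\<dots> = 2 ^ (n * K) * (real t / 2 ^ b) ^ (3 * s)"
  proof -
    obtain m where m: "n = 3 * b + m" using n le_Suc_ex by blast
    obtain l where l: "K = s + l" using sK le_Suc_ex by blast
    have e1: "n * K = m * s + n * l + 3 * b * s" using m l by (simp add: algebra_simps)
    have "(real t ^ 3 * 2 ^ (n - 3 * b)) ^ s * (2 ^ n) ^ (K - s) = real t ^ (3 * s) * 2 ^ (m * s + n * l)"
      using m l by (simp add: power_mult_distrib power_mult[symmetric] power_add mult.commute distrib_left)
    also have "\<dots> = 2 ^ (n * K) * (real t / 2 ^ b) ^ (3 * s)"
      unfolding e1 by (simp add: power_add power_divide power_mult[symmetric] field_simps)
    finally show ?thesis .
  qed
  finally show ?thesis unfolding eq c .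
qed
lemma half_sum: "(\<Sum>i<N. (1/2::real) ^ i) \<le> 2"
proof -
  have "(\<Sum>i<N. (1/2::real) ^ i) = 2 - 2 * (1/2) ^ N" by (induction N) auto
  then show ?thesis by simp
qed

lemma bad_subset:
  fixes eps \<eta> :: real
  assumes C3: "C \<ge> 3" and Kb: "(2::real) ^ b = \<eta> * real K" and eps2: "eps \<le> 2 * \<eta>"
    and k: "k \<in> idx_space K n" and nexp: "\<not> is_expander eps (1/2) C b K k"
  shows "\<exists>s \<in> {s \<in> {2..K}. real s \<le> eps * real K}. \<exists>S \<in> {S. S \<subseteq> {0..<K} \<and> card S = s}.
     \<exists>TT \<in> {T. T \<subseteq> {1..b} \<rightarrow>\<^sub>E (UNIV :: bool set) \<and> card T = s div 2} \<times>
            {T. T \<subseteq> {1..b} \<rightarrow>\<^sub>E (UNIV :: bool set) \<and> card T = s div 2} \<times>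
            {T. T \<subseteq> {1..b} \<rightarrow>\<^sub>E (UNIV :: bool set) \<and> card T = s div 2}.
     k \<in> {k \<in> idx_space K n. \<forall>i\<in>S. hashc b 1 (k i) \<in> fst TT \<and> hashc b 2 (k i) \<in> fst (snd TT) \<and> hashc b 3 (k i) \<in> snd (snd TT)}"
proof -
  let ?Bs = "{1..b} \<rightarrow>\<^sub>E (UNIV :: bool set)"
  obtain S where S: "S \<subseteq> {0..<K}" "S \<noteq> {}" "real (card S) \<le> eps * real K"
    and small0: "\<forall>c\<in>{1..C}. \<not> (real (card (nbhd b c k S)) > 1/2 * real (card S))"
    using nexp unfolding is_expander_def by blast
  have small: "\<And>c. c \<in> {1..C} \<Longrightarrow> real (card (nbhd b c k S)) \<le> 1/2 * real (card S)"
    using small0 by (simp add: not_less)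
  define s where "s = card S"
  have finS: "finite S" using S(1) finite_subset by blast
  have s1: "s \<ge> 1" using finS S(2) by (simp add: s_def Suc_le_eq card_gt_0_iff)
  have sK: "s \<le> K" unfolding s_def using S(1) by (metis card_atLeastLessThan card_mono finite_atLeastLessThan diff_zero)
  have nb: "card (nbhd b c k S) \<le> s div 2" and nb1: "card (nbhd b c k S) \<ge> 1" if "c \<in> {1,2,3}" for c
  proof -
    have "c \<in> {1..C}" using that C3 by auto
    then have "real (card (nbhd b c k S)) \<le> 1/2 * real s" using small s_def by auto
    then have "2 * card (nbhd b c k S) \<le> s" by linarith
    then show "card (nbhd b c k S) \<le> s div 2" by linarith
    show "card (nbhd b c k S) \<ge> 1" using finS S(2) by (simp add: nbhd_def Suc_le_eq card_gt_0_iff)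
  qed
  have s2: "s \<ge> 2" using nb[of 1] nb1[of 1] by auto
  have tB: "s div 2 \<le> card ?Bs"
  proof -
    have "real (s div 2) \<le> real s / 2" by linarith
    also have "\<dots> \<le> eps * real K / 2" using S(3) s_def by simp
    also have "\<dots> \<le> \<eta> * real K"
    proof -
      have "eps * real K \<le> 2 * \<eta> * real K" by (rule mult_right_mono[OF eps2]) simp
      then show ?thesis by linarith
    qed
    also have "\<dots> = real (2 ^ b)" using Kb by simp
    finally have "s div 2 \<le> 2 ^ b" by linarith
    then show ?thesis by (simp add: card_PiE)
  qed
  have sub: "nbhd b c k S \<subseteq> ?Bs" for c unfolding nbhd_def using hashc_in by blast
  have ex: "\<exists>T. nbhd b c k S \<subseteq> T \<and> T \<subseteq> ?Bs \<and> card T = s div 2" if "c \<in> {1,2,3}" for c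
    by (rule exists_subset_between[OF nb[OF that] tB sub]) (simp add: finite_PiE)
  obtain T1 where T1: "nbhd b 1 k S \<subseteq> T1" "T1 \<subseteq> ?Bs" "card T1 = s div 2" using ex[of 1] by auto
  obtain T2 where T2: "nbhd b 2 k S \<subseteq> T2" "T2 \<subseteq> ?Bs" "card T2 = s div 2" using ex[of 2] by auto
  obtain T3 where T3: "nbhd b 3 k S \<subseteq> T3" "T3 \<subseteq> ?Bs" "card T3 = s div 2" using ex[of 3] by auto
  show ?thesis
  proof (intro bexI)
    show "k \<in> {k \<in> idx_space K n. \<forall>i\<in>S. hashc b 1 (k i) \<in> fst (T1, T2, T3) \<and> hashc b 2 (k i) \<in> fst (snd (T1, T2, T3)) \<and> hashc b 3 (k i) \<in> snd (snd (T1, T2, T3))}"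
      using k T1(1) T2(1) T3(1) by (auto simp: nbhd_def)
    show "(T1, T2, T3) \<in> {T. T \<subseteq> ?Bs \<and> card T = s div 2} \<times> {T. T \<subseteq> ?Bs \<and> card T = s div 2} \<times> {T. T \<subseteq> ?Bs \<and> card T = s div 2}"
      using T1 T2 T3 by auto
    show "S \<in> {S. S \<subseteq> {0..<K} \<and> card S = s}" using S s_def by auto
    show "s \<in> {s \<in> {2..K}. real s \<le> eps * real K}" using s2 sK S(3) s_def by auto
  qed
qed

theorem lemma4:
  fixes \<delta> \<eta> :: real and C :: nat
  assumes "0 < \<delta>" and "\<delta> \<le> 1/3" and "\<eta> > 0" and "C \<ge> 3"
  shows "\<exists>eps > 0. \<exists>M :: real. \<forall>n b K :: nat.
           n \<ge> 1 \<longrightarrow> b > 0 \<longrightarrow> real b = \<delta> * real n \<longrightarrow>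
           (2::real) ^ b = \<eta> * real K \<longrightarrow> C * b \<le> n \<longrightarrow>
           measure_pmf.prob (pmf_of_set (idx_space K n))
              {k. is_expander eps (1/2) C b K k} \<ge> 1 - M / real K"
proof -
  note eta = \<open>\<eta> > 0\<close> and C3 = \<open>C \<ge> 3\<close>
  define A where "A = max 1 (exp 1 / (2 * \<eta>))"
  define Q where "Q = A^2 * exp 3 / (2 * \<eta>)"
  define eps where "eps = min (2 * \<eta>) (1 / (16 * Q))"
  have A1: "A \<ge> 1" by (simp add: A_def)
  have Qpos: "Q > 0" using A1 eta by (simp add: Q_def)
  have epspos: "eps > 0" using Qpos eta by (simp add: eps_def)
  have eps2: "eps \<le> 2 * \<eta>" by (simp add: eps_def)
  have Qeps: "Q * eps \<le> 1/16"
  proof -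
    have "eps \<le> 1 / (16 * Q)" by (simp add: eps_def)
    then have "Q * eps \<le> Q * (1 / (16 * Q))" using Qpos by (intro mult_left_mono) auto
    then show ?thesis using Qpos by simp
  qed
  show ?thesis
  proof (rule exI[of _ eps], rule conjI[OF epspos], rule exI[of _ "128 * A * Q"], intro allI impI)
    fix n b K :: nat
    assume n1: "n \<ge> 1" and b0: "b > 0" and bd: "real b = \<delta> * real n"
      and Kb: "(2::real) ^ b = \<eta> * real K" and Cb: "C * b \<le> n"
    have Kpos: "K > 0" using Kb eta by (metis mult_zero_right of_nat_0 neq0_conv power_not_zero zero_neq_numeral)
    have n3: "3 * b \<le> n" using C3 Cb by (meson le_trans mult_le_mono1)
    let ?\<Omega> = "idx_space K n"
    let ?Bs = "{1..b} \<rightarrow>\<^sub>E (UNIV :: bool set)"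
    let ?Sr = "{s \<in> {2..K}. real s \<le> eps * real K}"
    let ?SS = "\<lambda>s. {S. S \<subseteq> {0..<K} \<and> card S = s}"
    let ?TS = "\<lambda>s. {T. T \<subseteq> ?Bs \<and> card T = s div 2}"
    let ?TT = "\<lambda>s. ?TS s \<times> ?TS s \<times> ?TS s"
    let ?E = "\<lambda>S TT. {k \<in> ?\<Omega>. \<forall>i\<in>S. hashc b 1 (k i) \<in> fst TT \<and> hashc b 2 (k i) \<in> fst (snd TT) \<and> hashc b 3 (k i) \<in> snd (snd TT)}"
    let ?Bad = "{k \<in> ?\<Omega>. \<not> is_expander eps (1/2) C b K k}"
    have cardO: "card ?\<Omega> = 2 ^ (n * K)"
      by (simp add: idx_space_def card_PiE card_Vs power_mult)
    have finO: "finite ?\<Omega>" by (simp add: idx_space_def finite_PiE)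
    have neO: "?\<Omega> \<noteq> {}" using cardO by auto
    have finBs: "finite ?Bs" by (simp add: finite_PiE)
    have cardBs: "card ?Bs = 2 ^ b" by (simp add: card_PiE)
    have finTS: "finite (?TS s)" for s using finBs by (simp add: finite_subset)
    have finSS: "finite (?SS s)" for s by (rule finite_subset[of _ "Pow {0..<K}"]) auto
    have cardTS: "card (?TS s) = 2 ^ b choose (s div 2)" for s using n_subsets[OF finBs] cardBs by simp
    have cardSS: "card (?SS s) = K choose s" for s using n_subsets[of "{0..<K}" s] by simp
    have incl: "?Bad \<subseteq> (\<Union>s\<in>?Sr. \<Union>S\<in>?SS s. \<Union>TT\<in>?TT s. ?E S TT)"
    proof
      fix k assume kB: "k \<in> ?Bad"
      then have k1: "k \<in> ?\<Omega>" and k2: "\<not> is_expander eps (1/2) C b K k" by auto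
      obtain s S TT where s: "s \<in> ?Sr" and S: "S \<in> ?SS s" and TT: "TT \<in> ?TT s" and kE: "k \<in> ?E S TT"
        using bad_subset[OF C3 Kb eps2 k1 k2] by (elim bexE)
      show "k \<in> (\<Union>s\<in>?Sr. \<Union>S\<in>?SS s. \<Union>TT\<in>?TT s. ?E S TT)"
        by (rule UN_I[OF s], rule UN_I[OF S], rule UN_I[OF TT], rule kE)
    qed
    have "card ?Bad \<le> card (\<Union>s\<in>?Sr. \<Union>S\<in>?SS s. \<Union>TT\<in>?TT s. ?E S TT)"
      by (rule card_mono[OF _ incl]) (rule finite_subset[OF _ finO], auto)
    also have "\<dots> \<le> (\<Sum>s\<in>?Sr. card (\<Union>S\<in>?SS s. \<Union>TT\<in>?TT s. ?E S TT))"
      by (rule card_UN_le) simp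
    also have "\<dots> \<le> (\<Sum>s\<in>?Sr. \<Sum>S\<in>?SS s. \<Sum>TT\<in>?TT s. card (?E S TT))"
    proof (rule sum_mono)
      fix s assume "s \<in> ?Sr"
      have "card (\<Union>S\<in>?SS s. \<Union>TT\<in>?TT s. ?E S TT) \<le> (\<Sum>S\<in>?SS s. card (\<Union>TT\<in>?TT s. ?E S TT))"
        by (rule card_UN_le[OF finSS])
      also have "\<dots> \<le> (\<Sum>S\<in>?SS s. \<Sum>TT\<in>?TT s. card (?E S TT))"
        by (rule sum_mono, rule card_UN_le) (use finTS in auto)
      finally show "card (\<Union>S\<in>?SS s. \<Union>TT\<in>?TT s. ?E S TT) \<le> (\<Sum>S\<in>?SS s. \<Sum>TT\<in>?TT s. card (?E S TT))" .
    qed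
    finally have cB: "real (card ?Bad) \<le> real (\<Sum>s\<in>?Sr. \<Sum>S\<in>?SS s. \<Sum>TT\<in>?TT s. card (?E S TT))"
      by (rule of_nat_mono)
    also have "\<dots> = (\<Sum>s\<in>?Sr. \<Sum>S\<in>?SS s. \<Sum>TT\<in>?TT s. real (card (?E S TT)))" by simp
    also have "\<dots> \<le> (\<Sum>s\<in>?Sr. \<Sum>S\<in>?SS s. \<Sum>TT\<in>?TT s. 2 ^ (n * K) * (real (s div 2) / 2 ^ b) ^ (3 * s))"
    proof (intro sum_mono)
      fix s S TT assume s: "s \<in> ?Sr" and S: "S \<in> ?SS s" and TT: "TT \<in> ?TT s"
      obtain T1 T2 T3 where TT': "TT = (T1, T2, T3)" by (metis prod.collapse)
      have T: "T1 \<in> ?TS s" "T2 \<in> ?TS s" "T3 \<in> ?TS s" using TT TT' by auto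
      have fT: "finite T1" "finite T2" "finite T3" using T finBs finite_subset by auto
      show "real (card (?E S TT)) \<le> 2 ^ (n * K) * (real (s div 2) / 2 ^ b) ^ (3 * s)"
        unfolding TT' fst_conv snd_conv
        by (rule card_E) (use S T fT n3 in auto)
    qed
    also have "\<dots> = (\<Sum>s\<in>?Sr. 2 ^ (n * K) * (real (K choose s) * (real (2 ^ b choose (s div 2)) * (real (s div 2) / real (2 ^ b)) ^ s) ^ 3))"
    proof (rule sum.cong[OF refl])
      fix s assume "s \<in> ?Sr"
      have "card (?TT s) = (2 ^ b choose (s div 2)) ^ 3" unfolding card_cartesian_product cardTS by (simp add: power3_eq_cube)
      then show "(\<Sum>S\<in>?SS s. \<Sum>TT\<in>?TT s. 2 ^ (n * K) * (real (s div 2) / 2 ^ b) ^ (3 * s))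
          = 2 ^ (n * K) * (real (K choose s) * (real (2 ^ b choose (s div 2)) * (real (s div 2) / real (2 ^ b)) ^ s) ^ 3)"
        by (simp add: cardSS power_mult_distrib power_mult[symmetric] mult.commute)
    qed
    also have "\<dots> \<le> (\<Sum>s\<in>?Sr. 2 ^ (n * K) * (64 * A * Q / real K * (1/2) ^ s))"
    proof (rule sum_mono)
      fix s assume s: "s \<in> ?Sr"
      have "real (K choose s) * (real (2 ^ b choose (s div 2)) * (real (s div 2) / real (2 ^ b)) ^ s) ^ 3
          \<le> 64 * A * Q / real K * (1/2) ^ s"
        by (rule term_bound[OF eta Kpos _ _ refl _ eps2 A_def Q_def Qeps]) (use s Kb in auto)
      then show "2 ^ (n * K) * (real (K choose s) * (real (2 ^ b choose (s div 2)) * (real (s div 2) / real (2 ^ b)) ^ s) ^ 3)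
          \<le> 2 ^ (n * K) * (64 * A * Q / real K * (1/2) ^ s)" by (rule mult_left_mono) simp
    qed
    also have "\<dots> = 2 ^ (n * K) * (64 * A * Q / real K) * (\<Sum>s\<in>?Sr. (1/2) ^ s)"
      by (simp add: sum_distrib_left mult.assoc)
    also have "\<dots> \<le> 2 ^ (n * K) * (64 * A * Q / real K) * 2"
    proof -
      have "(\<Sum>s\<in>?Sr. (1/2::real) ^ s) \<le> (\<Sum>s<K+1. (1/2) ^ s)"
        by (rule sum_mono2) auto
      also have "\<dots> \<le> 2" by (rule half_sum)
      finally show ?thesis using Qpos A1 by (intro mult_left_mono) auto
    qed
    finally have bad: "real (card ?Bad) \<le> 2 ^ (n * K) * (128 * A * Q / real K)" by (simp add: mult_ac)
    have split: "card ?\<Omega> = card (?\<Omega> \<inter> {k. is_expander eps (1/2) C b K k}) + card ?Bad"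
    proof -
      have "?\<Omega> = (?\<Omega> \<inter> {k. is_expander eps (1/2) C b K k}) \<union> ?Bad" by auto
      moreover have "(?\<Omega> \<inter> {k. is_expander eps (1/2) C b K k}) \<inter> ?Bad = {}" by auto
      ultimately show ?thesis using finO by (metis (no_types, lifting) card_Un_disjoint finite_Un)
    qed
    have "measure_pmf.prob (pmf_of_set ?\<Omega>) {k. is_expander eps (1/2) C b K k}
        = real (card (?\<Omega> \<inter> {k. is_expander eps (1/2) C b K k})) / real (card ?\<Omega>)"
      by (rule measure_pmf_of_set[OF neO finO])
    also have "\<dots> = 1 - real (card ?Bad) / 2 ^ (n * K)"
    proof -
      have e0: "real (card ?\<Omega>) = real (card (?\<Omega> \<inter> {k. is_expander eps (1/2) C b K k})) + real (card ?Bad)"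
        by (subst split) (simp only: of_nat_add)
      have e1: "real (card ?\<Omega>) = 2 ^ (n * K)" using cardO by simp
      have e: "real (card (?\<Omega> \<inter> {k. is_expander eps (1/2) C b K k})) = 2 ^ (n * K) - real (card ?Bad)"
        using e0 e1 by linarith
      show ?thesis unfolding e e1 by (simp add: diff_divide_distrib)
    qed
    finally have pe: "measure_pmf.prob (pmf_of_set ?\<Omega>) {k. is_expander eps (1/2) C b K k} = 1 - real (card ?Bad) / 2 ^ (n * K)" .
    have "real (card ?Bad) / 2 ^ (n * K) \<le> 128 * A * Q / real K"
      using bad by (simp add: divide_le_eq mult.commute)
    then show "measure_pmf.prob (pmf_of_set ?\<Omega>) {k. is_expander eps (1/2) C b K k} \<ge> 1 - 128 * A * Q / real K"
      unfolding pe by linarith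
  qed
qed

end
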